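(* The set function $\mu^*$ has the following properties. (i) Monotonicity: if $A \subseteq B \subseteq \Omega$ then $\mu^*(A) \le \mu^*(B)$. (ii) Countable subadditivity: for any sequence of sets $A_n \subseteq \Omega$, $n \in \mathbb{N}$, one has $\mu^*\big(\bigcup_{n\in\mathbb{N}} A_n\big) \le \sum_{n\in\mathbb{N}} \mu^*(A_n)$. (iii) Singletons: if $\mathcal{P} = \{\mathbb{P}\}$ consists of a single probability measure, then $\mu^*(A) = \mathbb{P}(A)$ for every $A \in \mathcal{F}$. In particular (since $\mu^*(\emptyset)=0$), $\mu^*$ is an outer measure on $\Omega$.
   Context: Standing setup: $(\Omega, (\mathcal{F}_t)_{t\in\mathbb{N}_0}, \mathcal{F})$ is a filtered measurable space with $\mathcal{F} = \sigma\big(\bigcup_{t} \mathcal{F}_t\big)$. A stopping time is a map $\tau:\Omega\to\mathbb{N}_0\cup\{\infty\}$ with $\{\tau \le t\}\in\mathcal{F}_t$ for all $t$; $\mathcal{T}$ denotes the set of all stopping times. $\mathcal{P}$ is an arbitrary family of probability measures on $\mathcal{F}$. The inverse-capital measure is the $[0,1]$-valued set function defined for every $A\subseteq\Omega$ by $$\mu^*(A) = \inf_{\tau\in\mathcal{T}:\, A\subseteq\{\tau<\infty\}} \ \sup_{\mathbb{P}\in\mathcal{P}} \mathbb{P}(\tau<\infty).$$ *)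

theory Defs
  imports "HOL-Probability.Probability"
begin

definition is_filtration :: "'a set \<Rightarrow> (nat \<Rightarrow> 'a set set) \<Rightarrow> bool" where
  "is_filtration \<Omega> F \<longleftrightarrow> (\<forall>t. sigma_algebra \<Omega> (F t)) \<and> (\<forall>s t. s \<le> t \<longrightarrow> F s \<subseteq> F t)"

definition F_infty :: "'a set \<Rightarrow> (nat \<Rightarrow> 'a set set) \<Rightarrow> 'a set set" where
  "F_infty \<Omega> F = sigma_sets \<Omega> (\<Union>t. F t)"

definition stopping_times :: "'a set \<Rightarrow> (nat \<Rightarrow> 'a set set) \<Rightarrow> ('a \<Rightarrow> enat) set" where
  "stopping_times \<Omega> F = {\<tau>. \<forall>t::nat. {\<omega>\<in>\<Omega>. \<tau> \<omega> \<le> enat t} \<in> F t}"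

definition prob_measures_on :: "'a set \<Rightarrow> (nat \<Rightarrow> 'a set set) \<Rightarrow> 'a measure set" where
  "prob_measures_on \<Omega> F = {P. prob_space P \<and> space P = \<Omega> \<and> sets P = F_infty \<Omega> F}"

definition inv_capital :: "'a set \<Rightarrow> (nat \<Rightarrow> 'a set set) \<Rightarrow> 'a measure set \<Rightarrow> 'a set \<Rightarrow> ennreal" where
  "inv_capital \<Omega> F \<P> A =
     (INF \<tau> \<in> {\<tau> \<in> stopping_times \<Omega> F. A \<subseteq> {\<omega>\<in>\<Omega>. \<tau> \<omega> < \<infinity>}}.
        SUP P \<in> \<P>. emeasure P {\<omega>\<in>\<Omega>. \<tau> \<omega> < \<infinity>})"

end

theory Submission
  imports Defs
begin

lemma INF_enat_le: fixes g :: "'b \<Rightarrow> enat"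
  shows "(INF i\<in>I. g i) \<le> enat t \<longleftrightarrow> (\<exists>i\<in>I. g i \<le> enat t)"
proof -
  have "\<And>x::enat. x \<le> enat t \<longleftrightarrow> x < enat (Suc t)"
    by (case_tac x) auto
  then show ?thesis by (simp add: INF_less_iff)
qed

lemma INF_enat_fin: fixes g :: "'b \<Rightarrow> enat"
  shows "(INF i\<in>I. g i) < \<infinity> \<longleftrightarrow> (\<exists>i\<in>I. g i < \<infinity>)"
  by (rule INF_less_iff)

lemma filt_sets: assumes "is_filtration \<Omega> F" shows "F t \<subseteq> Pow \<Omega>"
proof -
  interpret sigma_algebra \<Omega> "F t" using assms unfolding is_filtration_def by auto
  show ?thesis by (rule space_closed)
qed

lemma st_event:
  assumes "is_filtration \<Omega> F" "\<tau> \<in> stopping_times \<Omega> F"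
  shows "{\<omega>\<in>\<Omega>. \<tau> \<omega> < \<infinity>} \<in> F_infty \<Omega> F"
proof -
  have eq: "{\<omega>\<in>\<Omega>. \<tau> \<omega> < \<infinity>} = (\<Union>t. {\<omega>\<in>\<Omega>. \<tau> \<omega> \<le> enat t})"
    by (auto, case_tac "\<tau> x", auto)
  have "\<And>t. {\<omega>\<in>\<Omega>. \<tau> \<omega> \<le> enat t} \<in> sigma_sets \<Omega> (\<Union>t. F t)"
    using assms(2) unfolding stopping_times_def by (auto intro: sigma_sets.Basic)
  then show ?thesis unfolding eq F_infty_def by (intro sigma_sets.Union) auto
qed

lemma st_cover:
  fixes C :: "nat \<Rightarrow> 'a set" and s :: "nat \<Rightarrow> nat"
  assumes filt: "is_filtration \<Omega> F" and C: "\<And>i. C i \<in> F (s i)"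
  defines "\<tau> \<equiv> \<lambda>\<omega>. INF i\<in>{i. \<omega> \<in> C i}. enat (s i)"
  shows "\<tau> \<in> stopping_times \<Omega> F" "{\<omega>\<in>\<Omega>. \<tau> \<omega> < \<infinity>} = (\<Union>i. C i)"
proof -
  have sub: "\<And>i. C i \<subseteq> \<Omega>" using filt_sets[OF filt] C by blast
  have sa: "\<And>t. sigma_algebra \<Omega> (F t)" and mono: "\<And>s t. s \<le> t \<Longrightarrow> F s \<subseteq> F t"
    using filt unfolding is_filtration_def by auto
  show "\<tau> \<in> stopping_times \<Omega> F"
    unfolding stopping_times_def
  proof (intro CollectI allI)
    fix t
    have "{\<omega>\<in>\<Omega>. \<tau> \<omega> \<le> enat t} = (\<Union>i. if s i \<le> t then C i else {})"
      using sub by (auto simp: \<tau>_def INF_enat_le split: if_splits)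
    also have "\<dots> \<in> F t"
    proof -
      interpret sigma_algebra \<Omega> "F t" by (rule sa)
      show ?thesis by (intro countable_nat_UN) (use C mono in \<open>auto split: if_splits\<close>)
    qed
    finally show "{\<omega>\<in>\<Omega>. \<tau> \<omega> \<le> enat t} \<in> F t" .
  qed
  have "\<And>\<omega>. \<tau> \<omega> < \<infinity> \<longleftrightarrow> (\<exists>i. \<omega> \<in> C i)"
    unfolding \<tau>_def by (simp only: INF_enat_fin) simp
  then show "{\<omega>\<in>\<Omega>. \<tau> \<omega> < \<infinity>} = (\<Union>i. C i)"
    using sub by blast
qed

lemma st_INF:
  fixes \<tau> :: "nat \<Rightarrow> 'a \<Rightarrow> enat"
  assumes filt: "is_filtration \<Omega> F" and st: "\<And>n. \<tau> n \<in> stopping_times \<Omega> F"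
  shows "(\<lambda>\<omega>. INF n. \<tau> n \<omega>) \<in> stopping_times \<Omega> F"
  unfolding stopping_times_def
proof (intro CollectI allI)
  fix t
  have sa: "\<And>t. sigma_algebra \<Omega> (F t)"
    using filt unfolding is_filtration_def by auto
  have "{\<omega>\<in>\<Omega>. (INF n. \<tau> n \<omega>) \<le> enat t} = (\<Union>n. {\<omega>\<in>\<Omega>. \<tau> n \<omega> \<le> enat t})"
    by (auto simp: INF_enat_le)
  also have "\<dots> \<in> F t"
  proof -
    interpret sigma_algebra \<Omega> "F t" by (rule sa)
    show ?thesis by (intro countable_nat_UN) (use st in \<open>auto simp: stopping_times_def\<close>)
  qed
  finally show "{\<omega>\<in>\<Omega>. (INF n. \<tau> n \<omega>) \<le> enat t} \<in> F t" .
qed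

lemma ic_mono:
  assumes "A \<subseteq> B"
  shows "inv_capital \<Omega> F \<P> A \<le> inv_capital \<Omega> F \<P> B"
  unfolding inv_capital_def using assms by (auto intro!: INF_superset_mono)

lemma ic_empty:
  assumes filt: "is_filtration \<Omega> F"
  shows "inv_capital \<Omega> F \<P> {} = 0"
proof -
  have sa: "\<And>t. sigma_algebra \<Omega> (F t)"
    using filt unfolding is_filtration_def by auto
  have e: "{} \<in> F t" for t
  proof -
    interpret sigma_algebra \<Omega> "F t" by (rule sa)
    show ?thesis by (rule empty_sets)
  qed
  have "(\<lambda>_. \<infinity>) \<in> stopping_times \<Omega> F"
    unfolding stopping_times_def using e by auto
  then have "inv_capital \<Omega> F \<P> {} \<le> (SUP P\<in>\<P>. emeasure P {\<omega>\<in>\<Omega>. (\<infinity>::enat) < \<infinity>})"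
    unfolding inv_capital_def by (intro INF_lower) auto
  also have "\<dots> \<le> 0" by (rule SUP_least) simp
  finally show ?thesis by simp
qed

lemma ic_subadd:
  fixes A :: "nat \<Rightarrow> 'a set"
  assumes filt: "is_filtration \<Omega> F" and Ps: "\<P> \<subseteq> prob_measures_on \<Omega> F"
  shows "inv_capital \<Omega> F \<P> (\<Union>n. A n) \<le> (\<Sum>n. inv_capital \<Omega> F \<P> (A n))"
proof (rule ennreal_le_epsilon)
  fix e :: real assume fin: "(\<Sum>n. inv_capital \<Omega> F \<P> (A n)) < top" and e: "0 < e"
  define S where "S \<tau> = (SUP P\<in>\<P>. emeasure P {\<omega>\<in>\<Omega>. \<tau> \<omega> < \<infinity>})" for \<tau> :: "'a \<Rightarrow> enat"
  define T where "T X = {\<tau> \<in> stopping_times \<Omega> F. X \<subseteq> {\<omega>\<in>\<Omega>. \<tau> \<omega> < \<infinity>}}" for X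
  have ic: "inv_capital \<Omega> F \<P> X = (INF \<tau>\<in>T X. S \<tau>)" for X
    unfolding inv_capital_def S_def T_def by simp
  have *: "inv_capital \<Omega> F \<P> (A n) < inv_capital \<Omega> F \<P> (A n) + e * (1/2)^Suc n" for n
    using fin e by (auto simp add: less_top dest!: ennreal_suminf_lessD)
  have "\<exists>\<tau>. \<tau> \<in> T (A n) \<and> S \<tau> < inv_capital \<Omega> F \<P> (A n) + e * (1/2)^Suc n" for n
  proof -
    have "(INF \<tau>\<in>T (A n). S \<tau>) < inv_capital \<Omega> F \<P> (A n) + e * (1/2)^Suc n"
      using *[of n] unfolding ic[of "A n", symmetric] .
    then show ?thesis by (auto simp: INF_less_iff)
  qed
  then obtain \<tau> where \<tau>: "\<And>n. \<tau> n \<in> T (A n)"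
    and \<tau>S: "\<And>n. S (\<tau> n) < inv_capital \<Omega> F \<P> (A n) + e * (1/2)^Suc n"
    by metis
  define \<sigma> where "\<sigma> \<omega> = (INF n. \<tau> n \<omega>)" for \<omega>
  have st: "\<And>n. \<tau> n \<in> stopping_times \<Omega> F" using \<tau> by (auto simp: T_def)
  have \<sigma>st: "\<sigma> \<in> stopping_times \<Omega> F"
    using st_INF[OF filt st] unfolding \<sigma>_def[abs_def] .
  have \<sigma>ev: "{\<omega>\<in>\<Omega>. \<sigma> \<omega> < \<infinity>} = (\<Union>n. {\<omega>\<in>\<Omega>. \<tau> n \<omega> < \<infinity>})"
  proof -
    have "\<And>\<omega>. \<sigma> \<omega> < \<infinity> \<longleftrightarrow> (\<exists>n. \<tau> n \<omega> < \<infinity>)"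
      unfolding \<sigma>_def by (simp only: INF_enat_fin) simp
    then show ?thesis by blast
  qed
  have "(\<Union>n. A n) \<subseteq> {\<omega>\<in>\<Omega>. \<sigma> \<omega> < \<infinity>}" using \<tau> unfolding \<sigma>ev T_def by blast
  hence "\<sigma> \<in> T (\<Union>n. A n)" using \<sigma>st T_def by auto
  hence "inv_capital \<Omega> F \<P> (\<Union>n. A n) \<le> S \<sigma>" unfolding ic by (rule INF_lower)
  also have "S \<sigma> \<le> (\<Sum>n. S (\<tau> n))"
    unfolding S_def
  proof (rule SUP_least)
    fix P assume P: "P \<in> \<P>"
    then have Pp: "sets P = F_infty \<Omega> F" using Ps by (auto simp: prob_measures_on_def)
    have "emeasure P {\<omega>\<in>\<Omega>. \<sigma> \<omega> < \<infinity>} \<le> (\<Sum>n. emeasure P {\<omega>\<in>\<Omega>. \<tau> n \<omega> < \<infinity>})"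
      unfolding \<sigma>ev using st_event[OF filt st] Pp by (intro emeasure_subadditive_countably) auto
    also have "\<dots> \<le> (\<Sum>n. SUP P\<in>\<P>. emeasure P {\<omega>\<in>\<Omega>. \<tau> n \<omega> < \<infinity>})"
      using P by (intro suminf_le) (auto intro: SUP_upper)
    finally show "emeasure P {\<omega>\<in>\<Omega>. \<sigma> \<omega> < \<infinity>} \<le> (\<Sum>n. SUP P\<in>\<P>. emeasure P {\<omega>\<in>\<Omega>. \<tau> n \<omega> < \<infinity>})" .
  qed
  also have "(\<Sum>n. S (\<tau> n)) \<le> (\<Sum>n. inv_capital \<Omega> F \<P> (A n) + e * (1/2)^Suc n)"
    using \<tau>S by (intro suminf_le) (auto intro: less_imp_le)
  also have "\<dots> = (\<Sum>n. inv_capital \<Omega> F \<P> (A n)) + (\<Sum>n. ennreal e * ennreal ((1/2) ^ Suc n))"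
    using \<open>0 < e\<close> by (subst suminf_add[symmetric])
                       (auto simp del: ennreal_suminf_cmult simp add: ennreal_mult[symmetric])
  also have "\<dots> = (\<Sum>n. inv_capital \<Omega> F \<P> (A n)) + e"
    unfolding ennreal_suminf_cmult
    by (subst suminf_ennreal_eq[OF zero_le_power power_half_series]) auto
  finally show "inv_capital \<Omega> F \<P> (\<Union>n. A n) \<le> (\<Sum>n. inv_capital \<Omega> F \<P> (A n)) + e" .
qed

lemma ic_singleton:
  assumes filt: "is_filtration \<Omega> F" and P: "P \<in> prob_measures_on \<Omega> F" and A: "A \<in> F_infty \<Omega> F"
  shows "inv_capital \<Omega> F {P} A = emeasure P A"
proof -
  define M where "M = (\<Union>t. F t)"
  have sa: "\<And>t. sigma_algebra \<Omega> (F t)" and mono: "\<And>s t. s \<le> t \<Longrightarrow> F s \<subseteq> F t"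
    using filt unfolding is_filtration_def by auto
  have Msub: "M \<subseteq> Pow \<Omega>" using filt_sets[OF filt] M_def by auto
  have alg: "algebra \<Omega> M"
    unfolding algebra_iff_Un
  proof (intro conjI ballI)
    show "M \<subseteq> Pow \<Omega>" by fact
    interpret s0: sigma_algebra \<Omega> "F 0" by (rule sa)
    show "{} \<in> M" using s0.empty_sets M_def by auto
  next
    fix a assume "a \<in> M" then obtain t where a: "a \<in> F t" unfolding M_def by auto
    interpret st: sigma_algebra \<Omega> "F t" by (rule sa)
    show "\<Omega> - a \<in> M" using st.compl_sets[OF a] M_def by auto
  next
    fix a b assume "a \<in> M" "b \<in> M"
    then obtain s t where "a \<in> F s" "b \<in> F t" unfolding M_def by auto
    then have ab: "a \<in> F (max s t)" "b \<in> F (max s t)" using mono[of s "max s t"] mono[of t "max s t"] by auto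
    interpret sm: sigma_algebra \<Omega> "F (max s t)" by (rule sa)
    show "a \<union> b \<in> M" using sm.Un[OF ab] M_def by auto
  qed
  interpret algebra \<Omega> M by (rule alg)
  have Ps: "sets P = sigma_sets \<Omega> M" "space P = \<Omega>" "prob_space P"
    using P unfolding prob_measures_on_def F_infty_def M_def by auto
  have MP: "M \<subseteq> sets P" using Ps by auto
  define f where "f = emeasure P"
  have posf: "positive M f" by (simp add: positive_def f_def)
  have ca: "countably_additive M f"
    using emeasure_countably_additive[of P] MP unfolding countably_additive_def f_def by blast
  have inc: "increasing M f" by (metis additive_increasing ca countably_additive_additive posf)
  let ?O = "outer_measure M f"
  define ls where "ls = lambda_system \<Omega> (Pow \<Omega>) ?O"
  have mls: "measure_space \<Omega> ls ?O"
    using sigma_algebra.caratheodory_lemma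
            [OF sigma_algebra_Pow outer_measure_space_outer_measure [OF posf inc]]
    by (simp add: ls_def)
  hence sls: "sigma_algebra \<Omega> ls" by (simp add: measure_space_def)
  have "M \<subseteq> ls"
    by (simp add: ls_def)
       (metis ca posf inc countably_additive_additive algebra_subset_lambda_system)
  hence sgs_sb: "sigma_sets \<Omega> M \<subseteq> ls"
    using sigma_algebra.sigma_sets_subset [OF sls, of "M"] by simp
  have ms: "measure_space \<Omega> (sigma_sets \<Omega> M) ?O"
    by (rule measure_down [OF mls], rule sigma_algebra_sigma_sets)
       (simp_all add: sgs_sb space_closed)
  define N where "N = measure_of \<Omega> (sigma_sets \<Omega> M) ?O"
  have ssa: "sigma_algebra \<Omega> (sigma_sets \<Omega> M)" using ms by (simp add: measure_space_def)
  have setsN: "sets N = sigma_sets \<Omega> M"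
    unfolding N_def by (rule sigma_algebra.sets_measure_of_eq[OF ssa])
  have emN: "\<And>X. X \<in> sigma_sets \<Omega> M \<Longrightarrow> emeasure N X = ?O X"
    unfolding N_def using ms by (intro emeasure_measure_of_sigma) (auto simp: measure_space_def)
  have "P = N"
  proof (rule measure_eqI_generator_eq[where E=M and \<Omega>=\<Omega> and A="\<lambda>_. \<Omega>"])
    show "Int_stable M" using Int by (auto simp: Int_stable_def)
    show "M \<subseteq> Pow \<Omega>" by fact
    show "sets P = sigma_sets \<Omega> M" by (rule Ps(1))
    show "sets N = sigma_sets \<Omega> M" by (rule setsN)
    show "range (\<lambda>_. \<Omega>) \<subseteq> M" using top by auto
    show "(\<Union>i. \<Omega>) = \<Omega>" by simp
    show "\<And>i. emeasure P \<Omega> \<noteq> \<infinity>"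
      using prob_space.emeasure_space_1[OF Ps(3)] Ps(2) by simp
  next
    fix X assume X: "X \<in> M"
    then have "X \<in> sigma_sets \<Omega> M" by auto
    then show "emeasure P X = emeasure N X"
      using emN outer_measure_agrees[OF posf ca X] f_def by auto
  qed
  have AM: "A \<in> sigma_sets \<Omega> M" using A unfolding F_infty_def M_def .
  have eqO: "emeasure P A = ?O A" using emN[OF AM] \<open>P = N\<close> by simp
  have up: "inv_capital \<Omega> F {P} A \<le> ?O A"
    unfolding outer_measure_def
  proof (rule INF_greatest)
    fix C :: "nat \<Rightarrow> 'a set" assume "C \<in> {C. range C \<subseteq> M \<and> disjoint_family C \<and> A \<subseteq> (\<Union>i. C i)}"
    then have CM: "\<And>i. C i \<in> M" and AC: "A \<subseteq> (\<Union>i. C i)" by auto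
    have "\<forall>i. \<exists>t. C i \<in> F t" using CM unfolding M_def by auto
    then obtain s where s: "\<And>i. C i \<in> F (s i)" by metis
    define \<tau> where "\<tau> \<equiv> \<lambda>\<omega>. INF i\<in>{i. \<omega> \<in> C i}. enat (s i)"
    have st: "\<tau> \<in> stopping_times \<Omega> F" and ev: "{\<omega>\<in>\<Omega>. \<tau> \<omega> < \<infinity>} = (\<Union>i. C i)"
      unfolding \<tau>_def by (rule st_cover[of \<Omega> F C s, OF filt s])+
    have "inv_capital \<Omega> F {P} A \<le> emeasure P {\<omega>\<in>\<Omega>. \<tau> \<omega> < \<infinity>}"
      unfolding inv_capital_def using st AC ev by (intro INF_lower2[of \<tau>]) auto
    also have "\<dots> \<le> (\<Sum>i. f (C i))"
      unfolding ev f_def using CM MP by (intro emeasure_subadditive_countably) auto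
    finally show "inv_capital \<Omega> F {P} A \<le> (\<Sum>i. f (C i))" .
  qed
  have low: "emeasure P A \<le> inv_capital \<Omega> F {P} A"
    unfolding inv_capital_def
  proof (rule INF_greatest)
    fix \<tau> assume t: "\<tau> \<in> {\<tau> \<in> stopping_times \<Omega> F. A \<subseteq> {\<omega>\<in>\<Omega>. \<tau> \<omega> < \<infinity>}}"
    then have "{\<omega>\<in>\<Omega>. \<tau> \<omega> < \<infinity>} \<in> sets P"
      using st_event[OF filt] Ps unfolding F_infty_def M_def by auto
    then show "emeasure P A \<le> (SUP Q\<in>{P}. emeasure Q {\<omega>\<in>\<Omega>. \<tau> \<omega> < \<infinity>})"
      using t by (auto intro!: emeasure_mono)
  qed
  show ?thesis using up low eqO by (auto intro: antisym)
qed

theorem mainTheorem1: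
  fixes \<Omega> :: "'a set" and F :: "nat \<Rightarrow> 'a set set" and \<P> :: "'a measure set"
  assumes "is_filtration \<Omega> F"
    and "\<P> \<subseteq> prob_measures_on \<Omega> F"
  shows "(\<forall>A B. A \<subseteq> B \<and> B \<subseteq> \<Omega> \<longrightarrow> inv_capital \<Omega> F \<P> A \<le> inv_capital \<Omega> F \<P> B)
    \<and> (\<forall>A :: nat \<Rightarrow> 'a set. (\<forall>n. A n \<subseteq> \<Omega>) \<longrightarrow>
          inv_capital \<Omega> F \<P> (\<Union>n. A n) \<le> (\<Sum>n. inv_capital \<Omega> F \<P> (A n)))
    \<and> (\<forall>P. \<P> = {P} \<longrightarrow> (\<forall>A \<in> F_infty \<Omega> F. inv_capital \<Omega> F \<P> A = emeasure P A))
    \<and> inv_capital \<Omega> F \<P> {} = 0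
    \<and> outer_measure_space (Pow \<Omega>) (inv_capital \<Omega> F \<P>)"
proof (intro conjI allI impI ballI)
  show "\<And>A B. A \<subseteq> B \<and> B \<subseteq> \<Omega> \<Longrightarrow> inv_capital \<Omega> F \<P> A \<le> inv_capital \<Omega> F \<P> B"
    by (auto intro: ic_mono)
  show "\<And>A. inv_capital \<Omega> F \<P> (\<Union>n. A n) \<le> (\<Sum>n. inv_capital \<Omega> F \<P> (A n))"
    by (rule ic_subadd[OF assms])
  show "\<And>P A. \<P> = {P} \<Longrightarrow> A \<in> F_infty \<Omega> F \<Longrightarrow> inv_capital \<Omega> F \<P> A = emeasure P A"
    using assms ic_singleton by blast
  show "inv_capital \<Omega> F \<P> {} = 0" by (rule ic_empty[OF assms(1)])
  show "outer_measure_space (Pow \<Omega>) (inv_capital \<Omega> F \<P>)"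
    unfolding outer_measure_space_def positive_def increasing_def countably_subadditive_def
    using ic_empty[OF assms(1)] ic_subadd[OF assms] by (auto intro: ic_mono)
qed

end
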